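(* Let $\mathcal{H}$ be a complex Hilbert space, let $T, S\in\mathbb{B}(\mathcal{H})$ be self-adjoint operators and let $N(\cdot)$ be a self-adjoint algebra norm on $\mathbb{B}(\mathcal{H})$. If $TS = ST$ or $TS=-ST$, then $$w_{N}(TS) \leq \min\{N(T)w_{N}(S),\ N(S)w_{N}(T)\}.$$
   Context: $\mathbb{B}(\mathcal{H})$ is the algebra of bounded linear operators on $\mathcal{H}$. A norm $N(\cdot)$ on $\mathbb{B}(\mathcal{H})$ is an algebra norm if $N(TS)\le N(T)N(S)$ for all $T,S$, and self-adjoint if $N(T^* )=N(T)$ for all $T$. For $A\in\mathbb{B}(\mathcal{H})$, ${\rm Re}(A)=\frac{A+A^*}{2}$. The generalized numerical radius is $w_N(T)=\sup_{\theta\in\mathbb{R}} N\big({\rm Re}(e^{i\theta}T)\big)$. *)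

theory Defs
  imports "HOL-Analysis.Analysis"
begin

text \<open>HOL-Analysis only provides real inner product spaces, so complex ones are
introduced here as a type class: a real normed vector space carrying a complex
scalar multiplication (compatible with the real one) and a complex inner product,
linear in the second and conjugate-linear in the first argument, inducing the norm.\<close>

class complex_inner_space = real_normed_vector +
  fixes scaleC :: "complex \<Rightarrow> 'a \<Rightarrow> 'a"
    and cinner :: "'a \<Rightarrow> 'a \<Rightarrow> complex"
  assumes scaleC_add_left: "scaleC (a + b) x = scaleC a x + scaleC b x"
    and scaleC_add_right: "scaleC a (x + y) = scaleC a x + scaleC a y"
    and scaleC_scaleC: "scaleC a (scaleC b x) = scaleC (a * b) x"
    and scaleC_one: "scaleC 1 x = x"
    and scaleR_scaleC: "scaleR r x = scaleC (complex_of_real r) x"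
    and cinner_commute: "cinner x y = cnj (cinner y x)"
    and cinner_add_left: "cinner (x + y) z = cinner x z + cinner y z"
    and cinner_scaleC_left: "cinner (scaleC c x) y = cnj c * cinner x y"
    and cinner_ge_zero: "Im (cinner x x) = 0 \<and> 0 \<le> Re (cinner x x)"
    and cinner_eq_zero_iff: "cinner x x = 0 \<longleftrightarrow> x = 0"
    and norm_eq_sqrt_cinner: "norm x = sqrt (Re (cinner x x))"

class chilbert_space = complex_inner_space + complete_space

text \<open>Sanity check that the classes are not vacuous: \<open>complex\<close> is an instance.\<close>

instantiation complex :: complex_inner_space
begin
definition scaleC_complex :: "complex \<Rightarrow> complex \<Rightarrow> complex" where
  "scaleC_complex a x = a * x"
definition cinner_complex :: "complex \<Rightarrow> complex \<Rightarrow> complex" where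
  "cinner_complex x y = cnj x * y"
instance
proof
  fix a b x y z c :: complex and r :: real
  show "scaleC (a + b) x = scaleC a x + scaleC b x" by (simp add: scaleC_complex_def algebra_simps)
  show "scaleC a (x + y) = scaleC a x + scaleC a y" by (simp add: scaleC_complex_def algebra_simps)
  show "scaleC a (scaleC b x) = scaleC (a * b) x" by (simp add: scaleC_complex_def algebra_simps)
  show "scaleC 1 x = x" by (simp add: scaleC_complex_def)
  show "scaleR r x = scaleC (complex_of_real r) x" by (simp add: scaleC_complex_def scaleR_conv_of_real)
  show "cinner x y = cnj (cinner y x)" by (simp add: cinner_complex_def)
  show "cinner (x + y) z = cinner x z + cinner y z" by (simp add: cinner_complex_def algebra_simps)
  show "cinner (scaleC c x) y = cnj c * cinner x y" by (simp add: cinner_complex_def scaleC_complex_def)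
  show "Im (cinner x x) = 0 \<and> 0 \<le> Re (cinner x x)" by (simp add: cinner_complex_def)
  show "cinner x x = 0 \<longleftrightarrow> x = 0" by (simp add: cinner_complex_def)
  show "norm x = sqrt (Re (cinner x x))"
    by (simp add: cinner_complex_def cmod_def power2_eq_square)
qed
end

instance complex :: chilbert_space ..

definition bounded_clinear_op :: "('a::complex_inner_space \<Rightarrow> 'a) \<Rightarrow> bool" where
  "bounded_clinear_op T \<longleftrightarrow>
     (\<forall>x y. T (x + y) = T x + T y) \<and>
     (\<forall>c x. T (scaleC c x) = scaleC c (T x)) \<and>
     (\<exists>K. \<forall>x. norm (T x) \<le> norm x * K)"

definition adj :: "('a::complex_inner_space \<Rightarrow> 'a) \<Rightarrow> ('a \<Rightarrow> 'a)" where
  "adj T = (SOME A. bounded_clinear_op A \<and> (\<forall>x y. cinner (T x) y = cinner x (A y)))"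

definition selfadjoint_op :: "('a::complex_inner_space \<Rightarrow> 'a) \<Rightarrow> bool" where
  "selfadjoint_op T \<longleftrightarrow> (\<forall>x y. cinner (T x) y = cinner x (T y))"

definition op_scale :: "complex \<Rightarrow> ('a::complex_inner_space \<Rightarrow> 'a) \<Rightarrow> ('a \<Rightarrow> 'a)" where
  "op_scale c T = (\<lambda>x. scaleC c (T x))"

definition op_Re :: "('a::complex_inner_space \<Rightarrow> 'a) \<Rightarrow> ('a \<Rightarrow> 'a)" where
  "op_Re A = op_scale (1/2) (\<lambda>x. A x + adj A x)"

definition op_norm_on_BH :: "(('a::complex_inner_space \<Rightarrow> 'a) \<Rightarrow> real) \<Rightarrow> bool" where
  "op_norm_on_BH N \<longleftrightarrow>
     (\<forall>T. bounded_clinear_op T \<longrightarrow> 0 \<le> N T) \<and>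
     (\<forall>T. bounded_clinear_op T \<longrightarrow> (N T = 0 \<longleftrightarrow> T = (\<lambda>x. 0))) \<and>
     (\<forall>c T. bounded_clinear_op T \<longrightarrow> N (op_scale c T) = cmod c * N T) \<and>
     (\<forall>T S. bounded_clinear_op T \<longrightarrow> bounded_clinear_op S \<longrightarrow>
        N (\<lambda>x. T x + S x) \<le> N T + N S)"

definition algebra_norm :: "(('a::complex_inner_space \<Rightarrow> 'a) \<Rightarrow> real) \<Rightarrow> bool" where
  "algebra_norm N \<longleftrightarrow> op_norm_on_BH N \<and>
     (\<forall>T S. bounded_clinear_op T \<longrightarrow> bounded_clinear_op S \<longrightarrow> N (T \<circ> S) \<le> N T * N S)"

definition selfadjoint_norm :: "(('a::complex_inner_space \<Rightarrow> 'a) \<Rightarrow> real) \<Rightarrow> bool" where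
  "selfadjoint_norm N \<longleftrightarrow> (\<forall>T. bounded_clinear_op T \<longrightarrow> N (adj T) = N T)"

definition w_N :: "(('a::complex_inner_space \<Rightarrow> 'a) \<Rightarrow> real) \<Rightarrow> ('a \<Rightarrow> 'a) \<Rightarrow> real" where
  "w_N N T = (SUP \<theta>::real. N (op_Re (op_scale (cis \<theta>) T)))"

end

theory Submission
  imports Defs
begin

lemma cinner_add_right: "cinner (x::'a::complex_inner_space) (y + z) = cinner x y + cinner x z"
  by (metis cinner_commute cinner_add_left complex_cnj_add)

lemma cinner_scaleC_right: "cinner (x::'a::complex_inner_space) (scaleC c y) = c * cinner x y"
  by (metis cinner_commute cinner_scaleC_left complex_cnj_mult complex_cnj_cnj)

lemma cinner_diff_right: "cinner (x::'a::complex_inner_space) (y - z) = cinner x y - cinner x z"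
  by (metis cinner_add_right diff_add_cancel add_diff_cancel)

lemma scaleC_minus1: "scaleC (-1) (v::'a::complex_inner_space) = - v"
  by (metis scaleR_scaleC scaleR_minus1_left of_real_minus of_real_1)

lemma norm_scaleC: "norm (scaleC k (v::'a::complex_inner_space)) = cmod k * norm v"
proof -
  have "cinner (scaleC k v) (scaleC k v) = (cnj k * k) * cinner v v"
    by (simp add: cinner_scaleC_left cinner_scaleC_right)
  also have "cnj k * k = complex_of_real ((cmod k)^2)"
    using complex_norm_square[of k] by (simp add: mult.commute)
  finally have "Re (cinner (scaleC k v) (scaleC k v)) = (cmod k)^2 * Re (cinner v v)"
    using cinner_ge_zero[of v] by simp
  then show ?thesis
    using cinner_ge_zero[of v] by (simp add: norm_eq_sqrt_cinner[of "scaleC k v"] norm_eq_sqrt_cinner[of v] real_sqrt_mult)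
qed

lemma bounded_op_scale:
  assumes "bounded_clinear_op (X::'a::complex_inner_space \<Rightarrow> 'a)"
  shows "bounded_clinear_op (op_scale k X)"
proof -
  from assms obtain K where K: "\<forall>x. norm (X x) \<le> norm x * K"
    and add: "\<forall>x y. X (x + y) = X x + X y" and sc: "\<forall>c x. X (scaleC c x) = scaleC c (X x)"
    unfolding bounded_clinear_op_def by blast
  have "norm (scaleC k (X x)) \<le> norm x * (cmod k * K)" for x
    using mult_left_mono[OF K[rule_format, of x], of "cmod k"] by (simp add: norm_scaleC mult.left_commute)
  moreover have "scaleC k (X (scaleC c x)) = scaleC c (scaleC k (X x))" for c x
    using sc by (simp add: scaleC_scaleC mult.commute)
  ultimately show ?thesis
    unfolding bounded_clinear_op_def op_scale_def using add by (auto simp: scaleC_add_right)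
qed

lemma mult_le_one_aux: "a \<le> 1 \<Longrightarrow> 0 \<le> (b::real) \<Longrightarrow> a * b \<le> b"
  using mult_right_mono[of a 1 b] by simp

lemma le_aux2: "x * 2 = a * b \<Longrightarrow> a \<le> 2 \<Longrightarrow> 0 \<le> (b::real) \<Longrightarrow> x \<le> b"
  using mult_right_mono[of a 2 b] by simp

lemma adj_unique:
  assumes "bounded_clinear_op (A::'a::complex_inner_space \<Rightarrow> 'a)"
    and "\<forall>x y. cinner (T x) y = cinner x (A y)"
  shows "adj T = A"
proof -
  let ?P = "\<lambda>B. bounded_clinear_op B \<and> (\<forall>x y. cinner (T x) y = cinner x (B y))"
  have "?P (adj T)" unfolding adj_def by (rule someI[where x=A]) (simp add: assms)
  then have eq: "cinner x (adj T y) = cinner x (A y)" for x y using assms(2) by metis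
  show ?thesis
  proof
    fix y
    have "cinner (adj T y - A y) (adj T y - A y) = 0"
      by (simp add: cinner_diff_right eq)
    then show "adj T y = A y" by (metis cinner_eq_zero_iff right_minus_eq)
  qed
qed

lemma op_Re_formula:
  assumes X: "bounded_clinear_op (X::'a::complex_inner_space \<Rightarrow> 'a)"
    and H: "\<forall>x y. cinner (X x) y = cinner x (scaleC e (X y))"
  shows "op_Re (op_scale c X) = op_scale ((c + cnj c * e) / 2) X"
proof -
  have "adj (op_scale c X) = op_scale (cnj c * e) X"
  proof (rule adj_unique)
    show "bounded_clinear_op (op_scale (cnj c * e) X)" using X by (rule bounded_op_scale)
    show "\<forall>x y. cinner (op_scale c X x) y = cinner x (op_scale (cnj c * e) X y)"
      using H by (simp add: op_scale_def cinner_scaleC_left cinner_scaleC_right scaleC_scaleC)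
  qed
  then show ?thesis
    by (simp add: op_Re_def op_scale_def scaleC_scaleC scaleC_add_right[symmetric]
        scaleC_add_left[symmetric] add_divide_distrib)
qed

lemma wN_le:
  assumes N: "algebra_norm N"
    and X: "bounded_clinear_op (X::'a::complex_inner_space \<Rightarrow> 'a)"
    and H: "\<forall>x y. cinner (X x) y = cinner x (scaleC e (X y))"
    and e: "cmod e = 1"
  shows "N (op_Re (op_scale (cis t) X)) = cmod ((cis t + cnj (cis t) * e) / 2) * N X"
    and "cmod ((cis t + cnj (cis t) * e) / 2) \<le> 1"
    and "w_N N X \<le> N X"
proof -
  have on: "op_norm_on_BH N" using N by (simp add: algebra_norm_def)
  have NX: "0 \<le> N X" using on X by (simp add: op_norm_on_BH_def)
  have bd: "cmod ((cis s + cnj (cis s) * e) / 2) \<le> 1" for s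
  proof -
    have "cmod (cis s + cnj (cis s) * e) \<le> cmod (cis s) + cmod (cnj (cis s) * e)"
      by (rule norm_triangle_ineq)
    also have "\<dots> = 2" using e by (simp add: norm_mult)
    finally show ?thesis by (simp add: norm_divide)
  qed
  have eq: "N (op_Re (op_scale (cis s) X)) = cmod ((cis s + cnj (cis s) * e) / 2) * N X" for s
    using op_Re_formula[OF X H] on X by (simp add: op_norm_on_BH_def)
  show "N (op_Re (op_scale (cis t) X)) = cmod ((cis t + cnj (cis t) * e) / 2) * N X" by (rule eq)
  show "cmod ((cis t + cnj (cis t) * e) / 2) \<le> 1" by (rule bd)
  show "w_N N X \<le> N X"
    unfolding w_N_def
  proof (rule cSUP_least)
    fix s :: real
    show "N (op_Re (op_scale (cis s) X)) \<le> N X"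
      using eq[of s] bd[of s] NX by (auto simp: mult_le_one_aux intro: le_aux2)
  qed simp
qed

lemma wN_selfadj:
  assumes N: "algebra_norm N"
    and X: "bounded_clinear_op (X::'a::complex_inner_space \<Rightarrow> 'a)"
    and sa: "selfadjoint_op X"
  shows "w_N N X = N X"
proof -
  have H: "\<forall>x y. cinner (X x) y = cinner x (scaleC 1 (X y))"
    using sa by (simp add: selfadjoint_op_def scaleC_one)
  note L = wN_le[OF N X H]
  have "N (op_Re (op_scale (cis 0) X)) = N X" using L(1)[of 0] by simp
  moreover have "N (op_Re (op_scale (cis 0) X)) \<le> w_N N X"
    unfolding w_N_def
  proof (rule cSUP_upper)
    have "N (op_Re (op_scale (cis s) X)) \<le> N X" for s
    proof -
      have "0 \<le> N X" using N X by (simp add: algebra_norm_def op_norm_on_BH_def)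
      then show ?thesis using L(1)[of s] L(2)[of s] by (auto simp: mult_le_one_aux intro: le_aux2)
    qed
    then show "bdd_above (range (\<lambda>s. N (op_Re (op_scale (cis s) X))))"
      by (intro bdd_aboveI[where M="N X"]) auto
  qed simp
  ultimately show ?thesis using L(3) by simp
qed

lemma bounded_comp:
  assumes "bounded_clinear_op (T::'a::complex_inner_space \<Rightarrow> 'a)" "bounded_clinear_op S"
  shows "bounded_clinear_op (T \<circ> S)"
proof -
  from assms(1) obtain K1 where K1: "\<forall>x. norm (T x) \<le> norm x * K1"
    unfolding bounded_clinear_op_def by blast
  from assms(2) obtain K2 where K2: "\<forall>x. norm (S x) \<le> norm x * K2"
    unfolding bounded_clinear_op_def by blast
  have "norm (T (S x)) \<le> norm x * (max K2 0 * max K1 0)" for x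
  proof -
    have "norm (T (S x)) \<le> norm (S x) * max K1 0"
      using K1[rule_format, of "S x"] by (smt (verit) mult_left_mono norm_ge_zero)
    also have "\<dots> \<le> (norm x * max K2 0) * max K1 0"
      using K2[rule_format, of x] by (intro mult_right_mono) (smt (verit) mult_left_mono norm_ge_zero, simp)
    finally show ?thesis by (simp add: mult.assoc)
  qed
  then show ?thesis using assms unfolding bounded_clinear_op_def by auto
qed

theorem corollary2p9:
  fixes T S :: "'a::chilbert_space \<Rightarrow> 'a"
    and N :: "('a \<Rightarrow> 'a) \<Rightarrow> real"
  assumes "bounded_clinear_op T" and "bounded_clinear_op S"
    and "selfadjoint_op T" and "selfadjoint_op S"
    and "algebra_norm N" and "selfadjoint_norm N"
    and "T \<circ> S = S \<circ> T \<or> T \<circ> S = (\<lambda>x. - (S \<circ> T) x)"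
  shows "w_N N (T \<circ> S) \<le> min (N T * w_N N S) (N S * w_N N T)"
proof -
  have B: "bounded_clinear_op (T \<circ> S)" using assms(1,2) by (rule bounded_comp)
  have wT: "w_N N T = N T" using wN_selfadj[OF assms(5) assms(1) assms(3)] .
  have wS: "w_N N S = N S" using wN_selfadj[OF assms(5) assms(2) assms(4)] .
  have base: "\<forall>x y. cinner ((T \<circ> S) x) y = cinner x (S (T y))"
    using assms(3,4) by (simp add: selfadjoint_op_def)
  obtain e where H: "\<forall>x y. cinner ((T \<circ> S) x) y = cinner x (scaleC e ((T \<circ> S) y))"
    and e: "cmod e = 1"
  proof (cases "T \<circ> S = S \<circ> T")
    case True
    then have "S (T y) = scaleC 1 ((T \<circ> S) y)" for y
      by (metis comp_apply scaleC_one)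
    then show ?thesis using that[of 1] base by simp
  next
    case False
    then have "T \<circ> S = (\<lambda>x. - (S \<circ> T) x)" using assms(7) by blast
    then have "S (T y) = scaleC (-1) ((T \<circ> S) y)" for y
      by (metis comp_apply scaleC_minus1 minus_minus)
    then show ?thesis using that[of "-1"] base by simp
  qed
  have "w_N N (T \<circ> S) \<le> N (T \<circ> S)" using wN_le(3)[OF assms(5) B H e] .
  also have "\<dots> \<le> N T * N S" using assms(5,1,2) by (simp add: algebra_norm_def)
  finally show ?thesis using wT wS by (simp add: mult.commute)
qed

end
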